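(* Let $P$ be a Markovian kernel on a measurable space $(E,\mathcal{B})$, $S_n=\frac1n\sum_{k=0}^{n-1}P^k$, $R=\sum_{k=0}^\infty2^{-(k+1)}P^k$, and $\mathcal{B}_1^+$ the set of measurable $f$ with $0\le f\le1$. Assume Assumption C: (i) there exist $C\in\mathcal{B}$, $\phi:\mathcal{B}_1^+\to\mathbb{R}_+$ and $\gamma:E\to\mathbb{R}_+$ such that $Pf(x)\le\phi(f)+\gamma(x)$ for all $x\in C$ and $f\in\mathcal{B}_1^+$; (ii) there exists a finite positive measure $m$ on $E$ such that (ii.1) $\lim_{m\circ R(A)\to0}\phi(R1_A)=0$, and (ii.2) there exists $n_0>0$ with $\sup_{n\ge n_0}m(S_n(1_C(\gamma-1)))<0$. Then the measure $m\circ R$ is mean almost invariant for $P$.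
   Context: $m\circ R$ denotes the measure $A\mapsto m(R1_A)$. A finite positive measure $\mu$ is mean almost invariant for $P$ if there exist $\delta\in[0,1)$, a set function $\psi:\mathcal{B}\to\mathbb{R}_+$ with $\lim_{\mu(A)\to0}\psi(A)=0$, and $n_1$ such that $\mu(S_n1_A)\le\psi(A)+\delta\mu(E)$ for all $A\in\mathcal{B}$ and $n\ge n_1$. *)

theory Defs
  imports "HOL-Probability.Probability"
begin

text \<open>Integral of an extended-real function w.r.t. a (positive) measure, as
  positive part minus negative part (the convention used for functions bounded
  below, for which the negative part is finite).\<close>
definition eint :: "'a measure \<Rightarrow> ('a \<Rightarrow> ereal) \<Rightarrow> ereal" where
  "eint N f = enn2ereal (\<integral>\<^sup>+ y. e2ennreal (f y) \<partial>N)
             - enn2ereal (\<integral>\<^sup>+ y. e2ennreal (- f y) \<partial>N)"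

definition kop :: "('a \<Rightarrow> 'a measure) \<Rightarrow> ('a \<Rightarrow> ereal) \<Rightarrow> 'a \<Rightarrow> ereal" where
  "kop P f x = eint (P x) f"

definition kpow :: "('a \<Rightarrow> 'a measure) \<Rightarrow> nat \<Rightarrow> ('a \<Rightarrow> ereal) \<Rightarrow> 'a \<Rightarrow> ereal" where
  "kpow P k f = (kop P ^^ k) f"

definition Smean :: "('a \<Rightarrow> 'a measure) \<Rightarrow> nat \<Rightarrow> ('a \<Rightarrow> ereal) \<Rightarrow> 'a \<Rightarrow> ereal" where
  "Smean P n f x = (\<Sum>k<n. kpow P k f x) / ereal (real n)"

definition Rop :: "('a \<Rightarrow> 'a measure) \<Rightarrow> ('a \<Rightarrow> ereal) \<Rightarrow> 'a \<Rightarrow> ereal" where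
  "Rop P f x = (\<Sum>k. ereal ((1/2) ^ Suc k) * kpow P k f x)"

definition mR :: "'a measure \<Rightarrow> ('a \<Rightarrow> 'a measure) \<Rightarrow> 'a measure \<Rightarrow> 'a measure" where
  "mR M P m = measure_of (space M) (sets M)
      (\<lambda>A. e2ennreal (eint m (Rop P (indicator A))))"

definition B1plus :: "'a measure \<Rightarrow> ('a \<Rightarrow> real) set" where
  "B1plus M = {f. f \<in> borel_measurable M \<and> (\<forall>x\<in>space M. 0 \<le> f x \<and> f x \<le> 1)}"

definition mean_almost_invariant ::
    "'a measure \<Rightarrow> ('a \<Rightarrow> 'a measure) \<Rightarrow> 'a measure \<Rightarrow> bool" where
  "mean_almost_invariant M P \<mu> \<longleftrightarrow>
     finite_measure \<mu> \<and> sets \<mu> = sets M \<and>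
     (\<exists>\<delta> \<psi> n1. 0 \<le> \<delta> \<and> \<delta> < 1 \<and> (0::nat) < n1 \<and>
        (\<forall>A\<in>sets M. 0 \<le> \<psi> A) \<and>
        (\<forall>\<epsilon>>0. \<exists>\<eta>>0. \<forall>A\<in>sets M. measure \<mu> A < \<eta> \<longrightarrow> \<psi> A < \<epsilon>) \<and>
        (\<forall>A\<in>sets M. \<forall>n\<ge>n1.
           eint \<mu> (Smean P n (indicator A)) \<le> ereal (\<psi> A + \<delta> * measure \<mu> (space M))))"

end

theory Submission
  imports Defs
begin

definition K :: "('a \<Rightarrow> 'a measure) \<Rightarrow> ('a \<Rightarrow> ennreal) \<Rightarrow> 'a \<Rightarrow> ennreal" where
  "K P f x = (\<integral>\<^sup>+ y. f y \<partial>P x)"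

definition Kp :: "('a \<Rightarrow> 'a measure) \<Rightarrow> nat \<Rightarrow> ('a \<Rightarrow> ennreal) \<Rightarrow> 'a \<Rightarrow> ennreal" where
  "Kp P k f = (K P ^^ k) f"

lemma Kp_0[simp]: "Kp P 0 f = f" by (simp add: Kp_def)
lemma Kp_Suc: "Kp P (Suc k) f = K P (Kp P k f)" by (simp add: Kp_def)
lemma Kp_Suc': "Kp P (Suc k) f = Kp P k (K P f)" by (simp add: Kp_def funpow_Suc_right del: funpow.simps)
lemma Kp_add: "Kp P i (Kp P j f) = Kp P (i + j) f" by (simp add: Kp_def funpow_add)

lemma eint_enn: "eint N (\<lambda>y. enn2ereal (f y)) = enn2ereal (\<integral>\<^sup>+ y. f y \<partial>N)"
  unfolding eint_def by (simp add: e2ennreal_neg zero_ennreal.rep_eq)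

lemma kop_enn: "kop P (\<lambda>y. enn2ereal (f y)) x = enn2ereal (K P f x)"
  unfolding kop_def K_def by (rule eint_enn)

lemma kpow_enn: "kpow P k (\<lambda>y. enn2ereal (f y)) = (\<lambda>y. enn2ereal (Kp P k f y))"
proof (induction k)
  case 0 then show ?case by (simp add: kpow_def)
next
  case (Suc k)
  have "kpow P (Suc k) (\<lambda>y. enn2ereal (f y)) = kop P (kpow P k (\<lambda>y. enn2ereal (f y)))"
    by (simp add: kpow_def)
  then show ?case using Suc by (simp add: kop_enn Kp_Suc fun_eq_iff)
qed

lemma indicator_enn: "(indicator A :: 'a \<Rightarrow> ereal) = (\<lambda>y. enn2ereal (indicator A y))"
  by (auto simp: fun_eq_iff indicator_def zero_ennreal.rep_eq one_ennreal.rep_eq)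

lemma ereal_mult_enn: "0 \<le> r \<Longrightarrow> ereal r * enn2ereal a = enn2ereal (ennreal r * a)"
  by (simp add: times_ennreal.rep_eq)

locale kern =
  fixes M :: "'a measure" and P :: "'a \<Rightarrow> 'a measure"
  assumes markov: "P \<in> M \<rightarrow>\<^sub>M prob_algebra M"
begin

lemma Px: "x \<in> space M \<Longrightarrow> prob_space (P x) \<and> sets (P x) = sets M"
  using measurable_space[OF markov] by (auto simp: space_prob_algebra)

lemma space_Px: "x \<in> space M \<Longrightarrow> space (P x) = space M"
  using Px sets_eq_imp_space_eq by blast

lemma P_sub: "P \<in> measurable M (subprob_algebra M)"
  using markov by (rule measurable_prob_algebraD)

lemma K_meas[measurable]: "f \<in> borel_measurable M \<Longrightarrow> K P f \<in> borel_measurable M"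
  unfolding K_def
  by (rule measurable_compose[OF P_sub nn_integral_measurable_subprob_algebra])

lemma Kp_meas[measurable]: "f \<in> borel_measurable M \<Longrightarrow> Kp P k f \<in> borel_measurable M"
  by (induction k) (auto simp: Kp_Suc K_meas)

lemma K_le1: "(\<And>y. y \<in> space M \<Longrightarrow> f y \<le> 1) \<Longrightarrow> x \<in> space M \<Longrightarrow> K P f x \<le> 1"
proof -
  assume f: "\<And>y. y \<in> space M \<Longrightarrow> f y \<le> 1" and x: "x \<in> space M"
  interpret prob_space "P x" using Px[OF x] by auto
  have "K P f x \<le> (\<integral>\<^sup>+ y. 1 \<partial>P x)"
    unfolding K_def by (rule nn_integral_mono) (use f space_Px[OF x] in auto)
  also have "\<dots> = 1" by (simp add: emeasure_space_1)
  finally show ?thesis .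
qed

lemma Kp_le1: "(\<And>y. y \<in> space M \<Longrightarrow> f y \<le> 1) \<Longrightarrow> x \<in> space M \<Longrightarrow> Kp P k f x \<le> 1"
  by (induction k arbitrary: x) (auto simp: Kp_Suc intro!: K_le1)

lemma K_one: "(\<And>y. y \<in> space M \<Longrightarrow> f y = 1) \<Longrightarrow> x \<in> space M \<Longrightarrow> K P f x = 1"
proof -
  assume f: "\<And>y. y \<in> space M \<Longrightarrow> f y = 1" and x: "x \<in> space M"
  interpret prob_space "P x" using Px[OF x] by auto
  have "K P f x = (\<integral>\<^sup>+ y. 1 \<partial>P x)"
    unfolding K_def by (rule nn_integral_cong) (use f space_Px[OF x] in auto)
  also have "\<dots> = 1" by (simp add: emeasure_space_1)
  finally show ?thesis .
qed

lemma Kp_one: "(\<And>y. y \<in> space M \<Longrightarrow> f y = 1) \<Longrightarrow> x \<in> space M \<Longrightarrow> Kp P k f x = 1"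
  by (induction k arbitrary: x) (auto simp: Kp_Suc intro!: K_one)

end

lemma suminf_swap_ennreal: "(\<Sum>i. \<Sum>j. f i j) = (\<Sum>j. \<Sum>i. (f i j :: ennreal))"
proof -
  have "(\<Sum>i. \<Sum>j. f i j) = (\<Sum>i. \<integral>\<^sup>+ j. f i j \<partial>count_space UNIV)"
    by (simp add: nn_integral_count_space_nat)
  also have "\<dots> = (\<integral>\<^sup>+ j. (\<Sum>i. f i j) \<partial>count_space UNIV)"
    by (rule nn_integral_suminf[symmetric]) simp
  also have "\<dots> = (\<Sum>j. \<Sum>i. f i j)"
    by (simp add: nn_integral_count_space_nat)
  finally show ?thesis .
qed

definition mk :: "('a \<Rightarrow> 'a measure) \<Rightarrow> 'a measure \<Rightarrow> nat \<Rightarrow> 'a measure" where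
  "mk P m k = ((\<lambda>N. bind N P) ^^ k) m"

definition cw :: "nat \<Rightarrow> ennreal" where "cw j = ennreal ((1/2) ^ Suc j)"

definition nu :: "('a \<Rightarrow> 'a measure) \<Rightarrow> 'a measure \<Rightarrow> 'a set \<Rightarrow> ennreal" where
  "nu P m A = (\<Sum>j. cw j * emeasure (mk P m j) A)"

locale kern2 = kern +
  fixes m :: "'a measure"
  assumes sets_m: "sets m = sets M" and ne: "space M \<noteq> {}"
begin

lemma sets_mk: "sets (mk P m k) = sets M"
proof (induction k)
  case 0 then show ?case by (simp add: mk_def sets_m)
next
  case (Suc k)
  have sp: "space (mk P m k) = space M" using Suc sets_eq_imp_space_eq by blast
  have "mk P m (Suc k) = bind (mk P m k) P" by (simp add: mk_def)
  also have "sets \<dots> = sets M"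
    by (rule sets_bind) (use Px sp ne in auto)
  finally show ?case .
qed

lemma space_mk: "space (mk P m k) = space M"
  using sets_mk sets_eq_imp_space_eq by blast

lemma int_mk: "f \<in> borel_measurable M \<Longrightarrow> (\<integral>\<^sup>+ x. f x \<partial>mk P m k) = (\<integral>\<^sup>+ x. Kp P k f x \<partial>m)"
proof (induction k arbitrary: f)
  case 0 then show ?case by (simp add: mk_def)
next
  case (Suc k)
  have Pm: "P \<in> measurable (mk P m k) (subprob_algebra M)"
    using P_sub measurable_cong_sets[OF sets_mk refl] by blast
  have "(\<integral>\<^sup>+ x. f x \<partial>mk P m (Suc k)) = (\<integral>\<^sup>+ x. f x \<partial>bind (mk P m k) P)"
    by (simp add: mk_def)
  also have "\<dots> = (\<integral>\<^sup>+ x. K P f x \<partial>mk P m k)"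
    unfolding K_def by (rule nn_integral_bind[OF Suc.prems Pm])
  also have "\<dots> = (\<integral>\<^sup>+ x. Kp P k (K P f) x \<partial>m)"
    by (rule Suc.IH) (rule K_meas[OF Suc.prems])
  finally show ?case by (simp add: Kp_Suc')
qed

lemma nu_ca: "countably_additive (sets M) (nu P m)"
  unfolding countably_additive_def
proof (intro allI impI)
  fix A :: "nat \<Rightarrow> 'a set"
  assume A: "range A \<subseteq> sets M" "disjoint_family A" "\<Union> (range A) \<in> sets M"
  have A': "range A \<subseteq> sets (mk P m j)" for j using A sets_mk by auto
  have "(\<Sum>i. nu P m (A i)) = (\<Sum>j. \<Sum>i. cw j * emeasure (mk P m j) (A i))"
    unfolding nu_def by (rule suminf_swap_ennreal)
  also have "\<dots> = (\<Sum>j. cw j * emeasure (mk P m j) (\<Union>i. A i))"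
    using suminf_emeasure[OF A' A(2)] by simp
  finally show "(\<Sum>i. nu P m (A i)) = nu P m (\<Union> (range A))" by (simp add: nu_def)
qed

lemma nu_pos: "positive (sets M) (nu P m)"
  by (simp add: positive_def nu_def)

definition NN where "NN = measure_of (space M) (sets M) (nu P m)"

lemma sets_NN: "sets NN = sets M" and space_NN: "space NN = space M"
  unfolding NN_def by simp_all

lemma emeasure_NN: "A \<in> sets M \<Longrightarrow> emeasure NN A = nu P m A"
  unfolding NN_def by (rule emeasure_measure_of_sigma[OF _ nu_pos nu_ca]) (simp_all add: sets.sigma_algebra_axioms)

lemma meas_mk: "u \<in> borel_measurable M \<Longrightarrow> u \<in> borel_measurable (mk P m j)"
  using measurable_cong_sets[OF sets_mk refl] by blast
lemma meas_NN: "u \<in> borel_measurable M \<Longrightarrow> u \<in> borel_measurable NN"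
  using measurable_cong_sets[OF sets_NN refl] by blast

lemma int_NN: "g \<in> borel_measurable M \<Longrightarrow> (\<integral>\<^sup>+ x. g x \<partial>NN) = (\<Sum>j. cw j * (\<integral>\<^sup>+ x. g x \<partial>mk P m j))"
proof (induction rule: borel_measurable_induct)
  case (cong f g)
  have "(\<integral>\<^sup>+ x. f x \<partial>NN) = (\<integral>\<^sup>+ x. g x \<partial>NN)"
    by (rule nn_integral_cong) (use cong space_NN in auto)
  moreover have "(\<integral>\<^sup>+ x. f x \<partial>mk P m j) = (\<integral>\<^sup>+ x. g x \<partial>mk P m j)" for j
    by (rule nn_integral_cong) (use cong space_mk in auto)
  ultimately show ?case using cong by simp
next
  case (set A)
  have "(\<integral>\<^sup>+ x. indicator A x \<partial>NN) = emeasure NN A"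
    using set sets_NN by (simp add: nn_integral_indicator)
  moreover have "(\<integral>\<^sup>+ x. indicator A x \<partial>mk P m j) = emeasure (mk P m j) A" for j
    using set sets_mk by (simp add: nn_integral_indicator)
  ultimately show ?case using set by (simp add: emeasure_NN nu_def)
next
  case (mult u c)
  have um: "u \<in> borel_measurable NN" "\<And>j. u \<in> borel_measurable (mk P m j)"
    using mult meas_mk meas_NN by auto
  have "(\<integral>\<^sup>+ x. c * u x \<partial>NN) = c * (\<integral>\<^sup>+ x. u x \<partial>NN)"
    using um by (simp add: nn_integral_cmult)
  also have "\<dots> = (\<Sum>j. c * (cw j * (\<integral>\<^sup>+ x. u x \<partial>mk P m j)))"
    using mult by simp
  also have "\<dots> = (\<Sum>j. cw j * (\<integral>\<^sup>+ x. c * u x \<partial>mk P m j))"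
    using um by (simp add: nn_integral_cmult mult_ac)
  finally show ?case .
next
  case (add u v)
  have um: "u \<in> borel_measurable NN" "\<And>j. u \<in> borel_measurable (mk P m j)"
      "v \<in> borel_measurable NN" "\<And>j. v \<in> borel_measurable (mk P m j)"
    using add(1,3) meas_mk meas_NN by auto
  have "(\<integral>\<^sup>+ x. v x + u x \<partial>NN) = (\<integral>\<^sup>+ x. v x \<partial>NN) + (\<integral>\<^sup>+ x. u x \<partial>NN)"
    using um by (simp add: nn_integral_add)
  also have "\<dots> = (\<Sum>j. cw j * (\<integral>\<^sup>+ x. v x \<partial>mk P m j)) + (\<Sum>j. cw j * (\<integral>\<^sup>+ x. u x \<partial>mk P m j))"
    using add by simp
  also have "\<dots> = (\<Sum>j. cw j * (\<integral>\<^sup>+ x. v x \<partial>mk P m j) + cw j * (\<integral>\<^sup>+ x. u x \<partial>mk P m j))"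
    by (rule suminf_add) simp_all
  also have "\<dots> = (\<Sum>j. cw j * (\<integral>\<^sup>+ x. v x + u x \<partial>mk P m j))"
    using um by (simp add: nn_integral_add distrib_left)
  finally show ?case .
next
  case (seq U)
  have um: "\<And>i. U i \<in> borel_measurable NN" "\<And>i j. U i \<in> borel_measurable (mk P m j)"
    using seq(1) meas_mk meas_NN by auto
  have inc: "incseq (\<lambda>i. cw j * (\<integral>\<^sup>+ x. U i x \<partial>mk P m j))" for j
    using \<open>incseq U\<close> by (auto simp: incseq_def le_fun_def intro!: mult_left_mono nn_integral_mono)
  have "(\<integral>\<^sup>+ x. (SUP i. U i) x \<partial>NN) = (SUP i. (\<integral>\<^sup>+ x. U i x \<partial>NN))"
    unfolding SUP_apply by (rule nn_integral_monotone_convergence_SUP[OF \<open>incseq U\<close> um(1)])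
  also have "\<dots> = (SUP i. \<Sum>j. cw j * (\<integral>\<^sup>+ x. U i x \<partial>mk P m j))"
    using seq.IH by simp
  also have "\<dots> = (\<Sum>j. SUP i. cw j * (\<integral>\<^sup>+ x. U i x \<partial>mk P m j))"
    by (rule ennreal_suminf_SUP_eq[symmetric]) (rule inc)
  also have "\<dots> = (\<Sum>j. cw j * (SUP i. (\<integral>\<^sup>+ x. U i x \<partial>mk P m j)))"
    by (simp add: SUP_mult_left_ennreal)
  also have "\<dots> = (\<Sum>j. cw j * (\<integral>\<^sup>+ x. (SUP i. U i) x \<partial>mk P m j))"
    unfolding SUP_apply using nn_integral_monotone_convergence_SUP[OF \<open>incseq U\<close> um(2)] by simp
  finally show ?case .
qed

end

lemma eint_cong: "(\<And>y. y \<in> space N \<Longrightarrow> F y = G y) \<Longrightarrow> eint N F = eint N G"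
  unfolding eint_def by (simp cong: nn_integral_cong)

lemma pw_ident:
  fixes F G :: ennreal
  assumes "G \<noteq> top"
  shows "(F - G) + G = F + e2ennreal (- (enn2ereal F - enn2ereal G))"
  using assms
proof (cases F; cases G)
  fix f g assume F: "F = ennreal f" "0 \<le> f" and G: "G = ennreal g" "0 \<le> g"
  show ?thesis
  proof (cases "g \<le> f")
    case True
    then show ?thesis using F G by (simp add: e2ennreal_neg ennreal_plus[symmetric] ennreal_minus ennreal_neg del: ennreal_plus)
  next
    case False
    then show ?thesis using F G by (simp add: e2ennreal_neg ennreal_plus[symmetric] ennreal_minus ennreal_neg del: ennreal_plus)
  qed
qed (auto simp: e2ennreal_neg)

lemma pw_le:
  fixes F G :: ennreal
  assumes "G \<noteq> top"
  shows "e2ennreal (- (enn2ereal F - enn2ereal G)) \<le> G"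
  using assms
proof (cases F; cases G)
  fix f g assume F: "F = ennreal f" "0 \<le> f" and G: "G = ennreal g" "0 \<le> g"
  show ?thesis
  proof (cases "g \<le> f")
    case True
    then show ?thesis using F G by (simp add: e2ennreal_neg)
  next
    case False
    then show ?thesis using F G by (simp add: e2ennreal_neg)
  qed
qed (auto simp: e2ennreal_neg)

lemma LIN:
  assumes fin: "finite_measure N"
    and Fm: "F \<in> borel_measurable N" and Gm: "G \<in> borel_measurable N"
    and Gb: "\<And>x. x \<in> space N \<Longrightarrow> G x \<le> ennreal B"
  shows "eint N (\<lambda>x. enn2ereal (F x) - enn2ereal (G x))
       = enn2ereal (\<integral>\<^sup>+ x. F x \<partial>N) - enn2ereal (\<integral>\<^sup>+ x. G x \<partial>N)"
proof -
  interpret finite_measure N by fact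
  define dp where "dp x = F x - G x" for x
  define dm where "dm x = e2ennreal (- (enn2ereal (F x) - enn2ereal (G x)))" for x
  have dpm: "dp \<in> borel_measurable N" "dm \<in> borel_measurable N"
    unfolding dp_def dm_def using Fm Gm by measurable
  have Gt: "x \<in> space N \<Longrightarrow> G x \<noteq> top" for x using Gb[of x] by (auto simp: top_unique)
  have "(\<integral>\<^sup>+ x. dp x + G x \<partial>N) = (\<integral>\<^sup>+ x. F x + dm x \<partial>N)"
    by (rule nn_integral_cong) (simp add: dp_def dm_def pw_ident Gt)
  then have eq: "(\<integral>\<^sup>+ x. dp x \<partial>N) + (\<integral>\<^sup>+ x. G x \<partial>N) = (\<integral>\<^sup>+ x. F x \<partial>N) + (\<integral>\<^sup>+ x. dm x \<partial>N)"
    using dpm Fm Gm by (simp add: nn_integral_add)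
  have IG: "(\<integral>\<^sup>+ x. G x \<partial>N) \<le> (\<integral>\<^sup>+ x. ennreal B \<partial>N)"
    by (rule nn_integral_mono) (rule Gb)
  also have "\<dots> < top" using emeasure_finite[of "space N"] by (simp add: ennreal_mult_eq_top_iff less_top[symmetric])
  finally have IGt: "(\<integral>\<^sup>+ x. G x \<partial>N) \<noteq> top" by simp
  have "(\<integral>\<^sup>+ x. dm x \<partial>N) \<le> (\<integral>\<^sup>+ x. G x \<partial>N)"
    by (rule nn_integral_mono) (simp add: dm_def pw_le Gt)
  then have IDt: "(\<integral>\<^sup>+ x. dm x \<partial>N) \<noteq> top" using IGt by (auto simp: top_unique)
  have "eint N (\<lambda>x. enn2ereal (F x) - enn2ereal (G x))
       = enn2ereal (\<integral>\<^sup>+ x. dp x \<partial>N) - enn2ereal (\<integral>\<^sup>+ x. dm x \<partial>N)"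
    by (simp add: eint_def dp_def dm_def)
  also have "\<dots> = enn2ereal (\<integral>\<^sup>+ x. F x \<partial>N) - enn2ereal (\<integral>\<^sup>+ x. G x \<partial>N)"
  proof -
    obtain a where a: "(\<integral>\<^sup>+ x. G x \<partial>N) = ennreal a" "0 \<le> a" using IGt ennreal_cases by (metis top_neq_ennreal)
    obtain b where b: "(\<integral>\<^sup>+ x. dm x \<partial>N) = ennreal b" "0 \<le> b" using IDt by (cases "(\<integral>\<^sup>+ x. dm x \<partial>N)") auto
    have e2: "enn2ereal (\<integral>\<^sup>+ x. dp x \<partial>N) + ereal a = enn2ereal (\<integral>\<^sup>+ x. F x \<partial>N) + ereal b"
      using arg_cong[OF eq, of enn2ereal] a b by (simp add: plus_ennreal.rep_eq)
    show ?thesis using a b e2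
      by (cases "enn2ereal (\<integral>\<^sup>+ x. dp x \<partial>N)"; cases "enn2ereal (\<integral>\<^sup>+ x. F x \<partial>N)") auto
  qed
  finally show ?thesis .
qed

lemma sumdiff:
  assumes "finite I" "\<And>k. k \<in> I \<Longrightarrow> B k \<noteq> top"
  shows "(\<Sum>k\<in>I. enn2ereal (A k) - enn2ereal (B k)) = enn2ereal (\<Sum>k\<in>I. A k) - enn2ereal (\<Sum>k\<in>I. B k)"
  using assms
proof (induction I rule: finite_induct)
  case empty then show ?case by (simp add: zero_ennreal.rep_eq)
next
  case (insert i I)
  have Bs: "(\<Sum>k\<in>I. B k) \<noteq> top" using insert by (simp add: ennreal_sum_eq_top)
  have Bi: "B i \<noteq> top" using insert by simp
  obtain bs where bs: "enn2ereal (\<Sum>k\<in>I. B k) = ereal bs" using Bs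
    by (cases "enn2ereal (\<Sum>k\<in>I. B k)") auto
  obtain bi where bi: "enn2ereal (B i) = ereal bi" using Bi
    by (cases "enn2ereal (B i)") auto
  have "(\<Sum>k\<in>insert i I. enn2ereal (A k) - enn2ereal (B k))
     = (enn2ereal (A i) - enn2ereal (B i)) + (enn2ereal (\<Sum>k\<in>I. A k) - enn2ereal (\<Sum>k\<in>I. B k))"
    using insert by simp
  also have "\<dots> = (enn2ereal (A i) + enn2ereal (\<Sum>k\<in>I. A k)) - (enn2ereal (B i) + enn2ereal (\<Sum>k\<in>I. B k))"
    using bs bi enn2ereal_nonneg[of "A i"] enn2ereal_nonneg[of "\<Sum>k\<in>I. A k"]
    by (cases "enn2ereal (A i)"; cases "enn2ereal (\<Sum>k\<in>I. A k)") auto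
  finally show ?case using insert by (simp add: plus_ennreal.rep_eq)
qed

lemma divdiff:
  assumes "0 < r" "Y \<noteq> top"
  shows "(enn2ereal X - enn2ereal Y) / ereal r = enn2ereal (X * ennreal (1/r)) - enn2ereal (Y * ennreal (1/r))"
proof -
  obtain y where y: "Y = ennreal y" "0 \<le> y" using assms(2) by (cases Y) auto
  show ?thesis
  proof (cases X)
    case (real x)
    then show ?thesis using y assms
      by (simp add: ennreal_mult'[symmetric] divide_ereal_def del: ennreal_mult')
         (simp add: divide_inverse left_diff_distrib)
  next
    case top
    then show ?thesis using y assms by (simp add: ennreal_mult_top divide_ereal_def)
  qed
qed

lemma divenn:
  assumes "0 < r"
  shows "enn2ereal X / ereal r = enn2ereal (X * ennreal (1/r))"
  using divdiff[OF assms, of 0 X] assms by (simp add: zero_ennreal.rep_eq)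

definition Rn :: "('a \<Rightarrow> 'a measure) \<Rightarrow> 'a set \<Rightarrow> 'a \<Rightarrow> ennreal" where
  "Rn P A x = (\<Sum>j. cw j * Kp P j (indicator A) x)"

lemma Rop_enn: "Rop P (indicator A) x = enn2ereal (Rn P A x)"
  unfolding Rop_def Rn_def indicator_enn kpow_enn cw_def
  by (simp add: ereal_mult_enn)

lemma Rop_enn': "Rop P (indicator A) = (\<lambda>x. enn2ereal (Rn P A x))"
  by (simp add: fun_eq_iff Rop_enn)

lemma cw_sum: "(\<Sum>j. cw j) = 1"
proof -
  have g: "(\<lambda>j. (1/2::real) ^ j) sums (1 / (1 - 1/2))"
    by (rule geometric_sums) simp
  have "(\<lambda>j. (1/2::real) * (1/2) ^ j) sums ((1/2) * (1 / (1 - 1/2)))"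
    by (rule sums_mult[OF g])
  then have ss: "(\<lambda>j. (1/2::real) ^ Suc j) sums 1"
    by (simp only: power_Suc) simp
  have "(\<Sum>j. ennreal ((1/2::real) ^ Suc j)) = ennreal (\<Sum>j. (1/2::real) ^ Suc j)"
    by (rule suminf_ennreal2) (auto intro: sums_summable[OF ss])
  also have "\<dots> = 1" using sums_unique[OF ss] by simp
  finally show ?thesis unfolding cw_def .
qed

lemma kpow_Suc: "kpow P (Suc k) F = kop P (kpow P k F)"
  by (simp add: kpow_def)

context kern
begin

lemma Rn_le1: "x \<in> space M \<Longrightarrow> Rn P A x \<le> 1"
proof -
  assume x: "x \<in> space M"
  have "Rn P A x \<le> (\<Sum>j. cw j * 1)"
    unfolding Rn_def
    by (intro suminf_le mult_left_mono Kp_le1 x) (auto simp: indicator_def)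
  then show ?thesis by (simp add: cw_sum)
qed

lemma Rn_meas[measurable]: assumes [measurable]: "A \<in> sets M" shows "Rn P A \<in> borel_measurable M"
  unfolding Rn_def by measurable

lemma LINK:
  assumes hp: "hp \<in> borel_measurable M" and hm: "hm \<in> borel_measurable M"
    and hb: "\<And>y. y \<in> space M \<Longrightarrow> hm y \<le> 1"
  shows "x \<in> space M \<Longrightarrow> kpow P k (\<lambda>y. enn2ereal (hp y) - enn2ereal (hm y)) x
           = enn2ereal (Kp P k hp x) - enn2ereal (Kp P k hm x)"
proof (induction k arbitrary: x)
  case 0 then show ?case by (simp add: kpow_def)
next
  case (Suc k)
  interpret prob_space "P x" using Px[OF Suc.prems] by auto
  have sp: "space (P x) = space M" using space_Px[OF Suc.prems] .
  have "kpow P (Suc k) (\<lambda>y. enn2ereal (hp y) - enn2ereal (hm y)) x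
      = eint (P x) (\<lambda>y. enn2ereal (Kp P k hp y) - enn2ereal (Kp P k hm y))"
    unfolding kpow_Suc kop_def by (rule eint_cong) (simp add: sp Suc.IH)
  also have "\<dots> = enn2ereal (K P (Kp P k hp) x) - enn2ereal (K P (Kp P k hm) x)"
    unfolding K_def
  proof (rule LIN[where B=1])
    show "finite_measure (P x)" by (rule finite_measure_axioms)
    show "Kp P k hp \<in> borel_measurable (P x)" "Kp P k hm \<in> borel_measurable (P x)"
      using Kp_meas hp hm measurable_cong_sets[OF conjunct2[OF Px[OF Suc.prems]] refl] by blast+
    show "\<And>y. y \<in> space (P x) \<Longrightarrow> Kp P k hm y \<le> ennreal 1"
      using Kp_le1[OF hb] sp by simp
  qed
  finally show ?case by (simp add: Kp_Suc)
qed

end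

context kern2
begin

lemma meas_m: "u \<in> borel_measurable M \<Longrightarrow> u \<in> borel_measurable m"
  using measurable_cong_sets[OF sets_m refl] by blast

lemma space_m: "space m = space M"
  using sets_m sets_eq_imp_space_eq by blast

lemma int_Kp_mk: "f \<in> borel_measurable M \<Longrightarrow>
   (\<integral>\<^sup>+ x. Kp P j f x \<partial>mk P m i) = (\<integral>\<^sup>+ x. f x \<partial>mk P m (i + j))"
  by (simp add: int_mk Kp_add)

lemma emeasure_mk_space: "emeasure (mk P m k) (space M) = emeasure m (space m)"
proof -
  have "emeasure (mk P m k) (space M) = (\<integral>\<^sup>+ x. indicator (space M) x \<partial>mk P m k)"
    using sets_mk by (simp add: nn_integral_indicator)
  also have "\<dots> = (\<integral>\<^sup>+ x. Kp P k (indicator (space M)) x \<partial>m)"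
    by (rule int_mk) simp
  also have "\<dots> = (\<integral>\<^sup>+ x. 1 \<partial>m)"
    by (rule nn_integral_cong) (simp add: space_m Kp_one)
  finally show ?thesis by simp
qed

lemma mR_eq: "mR M P m = NN"
  unfolding mR_def NN_def
proof (rule measure_of_eq)
  show "sets M \<subseteq> Pow (space M)" by (rule sets.space_closed)
  fix a assume "a \<in> sigma_sets (space M) (sets M)"
  then have a: "a \<in> sets M" by (simp add: sets.sigma_sets_eq)
  have "e2ennreal (eint m (Rop P (indicator a))) = (\<integral>\<^sup>+ x. Rn P a x \<partial>m)"
    by (simp add: Rop_enn' eint_enn)
  also have "\<dots> = (\<Sum>j. \<integral>\<^sup>+ x. cw j * Kp P j (indicator a) x \<partial>m)"
    unfolding Rn_def by (rule nn_integral_suminf) (rule meas_m, use a in measurable)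
  also have "\<dots> = (\<Sum>j. cw j * \<integral>\<^sup>+ x. Kp P j (indicator a) x \<partial>m)"
  proof -
    have "(\<integral>\<^sup>+ x. cw j * Kp P j (indicator a) x \<partial>m) = cw j * \<integral>\<^sup>+ x. Kp P j (indicator a) x \<partial>m" for j
      by (rule nn_integral_cmult, rule meas_m) (use a in measurable)
    then show ?thesis by simp
  qed
  also have "\<dots> = (\<Sum>j. cw j * emeasure (mk P m j) a)"
    using a sets_mk by (simp add: int_mk[symmetric] nn_integral_indicator)
  finally show "e2ennreal (eint m (Rop P (indicator a))) = nu P m a" by (simp add: nu_def)
qed

end

context kern2
begin

lemma alpha_le: "A \<in> sets M \<Longrightarrow> emeasure (mk P m k) A \<le> emeasure m (space m)"
  using emeasure_mono[of A "space M" "mk P m k"] sets_mk emeasure_mk_space sets.sets_into_space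
  by (metis sets.top)

lemma L1:
  assumes A[measurable]: "A \<in> sets M" and n: "0 < n"
  shows "eint NN (Smean P n (indicator A))
     = enn2ereal ((\<Sum>k<n. \<Sum>j. cw j * emeasure (mk P m (j + k)) A) * ennreal (1 / real n))"
proof -
  define c where "c = ennreal (1 / real n)"
  define Sg where "Sg x = (\<Sum>k<n. Kp P k (indicator A) x) * c" for x
  have Sgm[measurable]: "Sg \<in> borel_measurable M" unfolding Sg_def by measurable
  have "Smean P n (indicator A) = (\<lambda>x. enn2ereal (Sg x))"
    using n unfolding Smean_def indicator_enn kpow_enn Sg_def c_def
    by (simp add: fun_eq_iff divenn)
  then have "eint NN (Smean P n (indicator A)) = enn2ereal (\<integral>\<^sup>+ x. Sg x \<partial>NN)"
    by (simp add: eint_enn)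
  also have "(\<integral>\<^sup>+ x. Sg x \<partial>NN) = (\<Sum>j. cw j * (\<integral>\<^sup>+ x. Sg x \<partial>mk P m j))"
    by (rule int_NN) (rule Sgm)
  also have "\<dots> = (\<Sum>j. cw j * ((\<Sum>k<n. emeasure (mk P m (j + k)) A) * c))"
  proof -
    have "(\<integral>\<^sup>+ x. Sg x \<partial>mk P m j) = (\<Sum>k<n. emeasure (mk P m (j + k)) A) * c" for j
    proof -
      have "(\<integral>\<^sup>+ x. Sg x \<partial>mk P m j) = (\<integral>\<^sup>+ x. (\<Sum>k<n. Kp P k (indicator A) x) \<partial>mk P m j) * c"
        unfolding Sg_def by (rule nn_integral_multc) (rule meas_mk, measurable)
      also have "(\<integral>\<^sup>+ x. (\<Sum>k<n. Kp P k (indicator A) x) \<partial>mk P m j)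
          = (\<Sum>k<n. \<integral>\<^sup>+ x. Kp P k (indicator A) x \<partial>mk P m j)"
        by (rule nn_integral_sum) (rule meas_mk, measurable)
      also have "\<dots> = (\<Sum>k<n. emeasure (mk P m (j + k)) A)"
        using sets_mk by (simp add: int_Kp_mk nn_integral_indicator)
      finally show ?thesis .
    qed
    then show ?thesis by simp
  qed
  also have "\<dots> = (\<Sum>j. c * (\<Sum>k<n. cw j * emeasure (mk P m (j + k)) A))"
    by (simp add: sum_distrib_left mult_ac)
  also have "\<dots> = c * (\<Sum>j. \<Sum>k<n. cw j * emeasure (mk P m (j + k)) A)"
    by (rule ennreal_suminf_cmult)
  also have "(\<Sum>j. \<Sum>k<n. cw j * emeasure (mk P m (j + k)) A) = (\<Sum>k<n. \<Sum>j. cw j * emeasure (mk P m (j + k)) A)"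
    by (rule suminf_sum) simp
  finally show ?thesis by (simp add: c_def mult.commute)
qed

lemma L2: "2 * (\<Sum>j. cw j * emeasure (mk P m (j + k)) A)
   = emeasure (mk P m k) A + (\<Sum>j. cw j * emeasure (mk P m (j + Suc k)) A)"
proof -
  have cs: "cw (Suc j) = ennreal (1/2) * cw j" for j
    unfolding cw_def power_Suc[of "1/2::real" "Suc j"] by (rule ennreal_mult) simp_all
  have "(\<Sum>j. cw j * emeasure (mk P m (j + k)) A)
      = (\<Sum>j. cw (j + 1) * emeasure (mk P m (j + 1 + k)) A) + (\<Sum>j<1. cw j * emeasure (mk P m (j + k)) A)"
    by (rule suminf_offset) simp
  also have "\<dots> = ennreal (1/2) * (\<Sum>j. cw j * emeasure (mk P m (j + Suc k)) A) + ennreal (1/2) * emeasure (mk P m k) A"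
  proof -
    have "(\<Sum>j. cw (j + 1) * emeasure (mk P m (j + 1 + k)) A) = (\<Sum>j. ennreal (1/2) * (cw j * emeasure (mk P m (j + Suc k)) A))"
      by (simp only: cs Suc_eq_plus1[symmetric] mult.assoc add_Suc add_Suc_right)
    also have "\<dots> = ennreal (1/2) * (\<Sum>j. cw j * emeasure (mk P m (j + Suc k)) A)"
      by (rule ennreal_suminf_cmult)
    finally show ?thesis by (simp add: cw_def)
  qed
  finally have "2 * (\<Sum>j. cw j * emeasure (mk P m (j + k)) A)
      = 2 * (ennreal (1/2) * (\<Sum>j. cw j * emeasure (mk P m (j + Suc k)) A) + ennreal (1/2) * emeasure (mk P m k) A)"
    by simp
  also have "\<dots> = (2 * ennreal (1/2)) * (\<Sum>j. cw j * emeasure (mk P m (j + Suc k)) A) + (2 * ennreal (1/2)) * emeasure (mk P m k) A"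
    by (simp add: distrib_left mult.assoc)
  also have "2 * ennreal (1/2) = 1"
  proof -
    have "ennreal 2 * ennreal (1/2) = ennreal (2 * (1/2))" by (rule ennreal_mult[symmetric]) auto
    then show ?thesis by simp
  qed
  finally show ?thesis by (simp add: add.commute)
qed

lemma L3:
  assumes A[measurable]: "A \<in> sets M"
  shows "(\<integral>\<^sup>+ x. K P (Rn P A) x \<partial>mk P m k) = (\<Sum>j. cw j * emeasure (mk P m (j + Suc k)) A)"
proof -
  have "(\<integral>\<^sup>+ x. K P (Rn P A) x \<partial>mk P m k) = (\<integral>\<^sup>+ x. Kp P (Suc 0) (Rn P A) x \<partial>mk P m k)"
    by (simp add: Kp_Suc)
  also have "\<dots> = (\<integral>\<^sup>+ x. Rn P A x \<partial>mk P m (Suc k))"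
    by (simp add: int_Kp_mk)
  also have "\<dots> = (\<Sum>j. \<integral>\<^sup>+ x. cw j * Kp P j (indicator A) x \<partial>mk P m (Suc k))"
    unfolding Rn_def by (rule nn_integral_suminf) (rule meas_mk, measurable)
  also have "\<dots> = (\<Sum>j. cw j * emeasure (mk P m (j + Suc k)) A)"
  proof -
    have "(\<integral>\<^sup>+ x. cw j * Kp P j (indicator A) x \<partial>mk P m (Suc k)) = cw j * emeasure (mk P m (j + Suc k)) A" for j
    proof -
      have "(\<integral>\<^sup>+ x. cw j * Kp P j (indicator A) x \<partial>mk P m (Suc k)) = cw j * (\<integral>\<^sup>+ x. Kp P j (indicator A) x \<partial>mk P m (Suc k))"
        by (rule nn_integral_cmult) (rule meas_mk, measurable)
      also have "\<dots> = cw j * emeasure (mk P m (j + Suc k)) A"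
        using sets_mk by (simp add: int_Kp_mk nn_integral_indicator add.commute)
      finally show ?thesis .
    qed
    then show ?thesis by simp
  qed
  finally show ?thesis .
qed

end

lemma L4:
  fixes g :: "'a \<Rightarrow> ennreal"
  assumes ph0: "0 \<le> ph" and g0: "0 \<le> gy"
    and iA: "y \<in> C \<Longrightarrow> Kg \<le> ennreal (ph + gy)"
    and le1: "Kg \<le> 1"
  shows "Kg + indicator C y * ennreal (1 - gy) \<le> ennreal (ph + 1) + indicator C y * ennreal (gy - 1)"
proof (cases "y \<in> C")
  case True
  show ?thesis
  proof (cases "1 \<le> gy")
    case True2: True
    have "Kg \<le> ennreal (ph + 1 + (gy - 1))" using iA[OF True] by simp
    also have "\<dots> = ennreal (ph + 1) + ennreal (gy - 1)" using True2 ph0 by (subst ennreal_plus[symmetric]) auto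
    finally show ?thesis using True True2 by (simp add: ennreal_neg)
  next
    case False
    have "Kg + ennreal (1 - gy) \<le> ennreal (ph + gy) + ennreal (1 - gy)"
      using iA[OF True] by (rule add_right_mono)
    also have "\<dots> = ennreal (ph + gy + (1 - gy))" using False ph0 g0 by (subst ennreal_plus[symmetric]) auto
    finally show ?thesis using True False by (simp add: ennreal_neg)
  qed
next
  case False
  have "Kg \<le> ennreal (ph + 1)" using le1 ph0 by (metis ennreal_1 ennreal_leI le_add_same_cancel2 order_trans)
  then show ?thesis using False by simp
qed

lemma split_pm: "ereal r - 1 = enn2ereal (ennreal (r - 1)) - enn2ereal (ennreal (1 - r))"
proof (cases "1 \<le> r")
  case True
  have "ereal r - 1 = ereal (r - 1)" by (simp add: one_ereal_def)
  then show ?thesis using True by (simp add: ennreal_neg zero_ennreal.rep_eq)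
next
  have e: "ereal r - 1 = ereal (r - 1)" by (simp add: one_ereal_def)
  case False then show ?thesis using e by (simp add: ennreal_neg zero_ennreal.rep_eq)
qed

context kern2
begin

lemma core:
  assumes A[measurable]: "A \<in> sets M" and n: "0 < n" and C[measurable]: "C \<in> sets M"
    and gm[measurable]: "\<gamma> \<in> borel_measurable M" and gnn: "\<forall>x\<in>space M. 0 \<le> \<gamma> x"
    and ph0: "0 \<le> ph"
    and iA: "\<forall>x\<in>C. K P (Rn P A) x \<le> ennreal (ph + \<gamma> x)"
    and fin: "finite_measure m"
    and sb: "eint m (Smean P n (\<lambda>x. indicator C x * (ereal (\<gamma> x) - 1))) \<le> ereal s"
    and emE: "emeasure m (space m) = ennreal e" and e0: "0 \<le> e"
  shows "eint NN (Smean P n (indicator A)) \<le> ereal (e/2 * ph + e + s/2)"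
proof -
  define \<alpha> where "\<alpha> k = emeasure (mk P m k) A" for k
  define T where "T k = (\<Sum>j. cw j * emeasure (mk P m (j + k)) A)" for k
  define hp where "hp x = indicator C x * ennreal (\<gamma> x - 1)" for x
  define hm where "hm x = indicator C x * ennreal (1 - \<gamma> x)" for x
  define a where "a k = (\<integral>\<^sup>+ x. hp x \<partial>mk P m k)" for k
  define b where "b k = (\<integral>\<^sup>+ x. hm x \<partial>mk P m k)" for k
  define c where "c = ennreal (1 / real n)"
  have hpm[measurable]: "hp \<in> borel_measurable M" unfolding hp_def by measurable
  have hmm[measurable]: "hm \<in> borel_measurable M" unfolding hm_def by measurable
  have hm1: "hm y \<le> 1" if "y \<in> space M" for y
    using gnn that by (auto simp: hm_def indicator_def ennreal_le_1)
  have Rnm[measurable]: "Rn P A \<in> borel_measurable M" by measurable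
  have Km: "K P (Rn P A) \<in> borel_measurable M" by (rule K_meas) (rule Rnm)
  have mEt: "emeasure m (space m) \<noteq> top" using emE by simp
  have al: "\<alpha> k \<le> ennreal e" for k unfolding \<alpha>_def using alpha_le[OF A] emE by simp
  have Tl: "T k \<le> ennreal e" for k
  proof -
    have "T k \<le> (\<Sum>j. cw j * ennreal e)"
      unfolding T_def by (intro suminf_le mult_left_mono) (use al[unfolded \<alpha>_def] in auto)
    also have "\<dots> = ennreal e" by (simp add: cw_sum mult.commute[of _ "ennreal e"])
    finally show ?thesis .
  qed
  have bl: "b k \<le> ennreal e" for k
  proof -
    have "b k \<le> (\<integral>\<^sup>+ x. 1 \<partial>mk P m k)"
      unfolding b_def by (rule nn_integral_mono) (simp add: hm1 space_mk)
    also have "\<dots> = ennreal e" using emeasure_mk_space[of k] emE by (simp add: space_mk)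
    finally show ?thesis .
  qed
  have L6: "2 * T k + b k \<le> \<alpha> k + ennreal (ph + 1) * ennreal e + a k" for k
  proof -
    have "(\<integral>\<^sup>+ x. K P (Rn P A) x + hm x \<partial>mk P m k) \<le> (\<integral>\<^sup>+ x. ennreal (ph + 1) + hp x \<partial>mk P m k)"
    proof (rule nn_integral_mono)
      fix y assume y: "y \<in> space (mk P m k)"
      then have yM: "y \<in> space M" by (simp add: space_mk)
      show "K P (Rn P A) y + hm y \<le> ennreal (ph + 1) + hp y"
        unfolding hm_def hp_def
        by (rule L4[OF ph0 gnn[rule_format, OF yM]]) (use iA in auto, intro K_le1 Rn_le1 yM)
    qed
    also have "\<dots> = ennreal (ph + 1) * ennreal e + a k"
      unfolding a_def
      by (subst nn_integral_add) (use meas_mk[OF hpm] emeasure_mk_space[of k] emE space_mk in auto)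
    finally have "(\<integral>\<^sup>+ x. K P (Rn P A) x \<partial>mk P m k) + b k \<le> ennreal (ph + 1) * ennreal e + a k"
      unfolding b_def by (subst (asm) nn_integral_add) (use meas_mk[OF Km] meas_mk[OF hmm] in auto)
    then have "\<alpha> k + ((\<integral>\<^sup>+ x. K P (Rn P A) x \<partial>mk P m k) + b k) \<le> \<alpha> k + (ennreal (ph + 1) * ennreal e + a k)"
      by (rule add_left_mono)
    then show ?thesis
      using L2[of k A] L3[OF A, of k] unfolding T_def \<alpha>_def by (simp add: add_ac)
  qed
  have L7: "2 * (\<Sum>k<n. T k) + (\<Sum>k<n. b k) \<le> (\<Sum>k<n. \<alpha> k) + of_nat n * (ennreal (ph + 1) * ennreal e) + (\<Sum>k<n. a k)"
  proof -
    have "(\<Sum>k<n. 2 * T k + b k) \<le> (\<Sum>k<n. \<alpha> k + ennreal (ph + 1) * ennreal e + a k)"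
      by (rule sum_mono) (rule L6)
    then show ?thesis by (simp add: sum.distrib sum_distrib_left)
  qed
  have h_eq: "(\<lambda>x. indicator C x * (ereal (\<gamma> x) - 1)) = (\<lambda>x. enn2ereal (hp x) - enn2ereal (hm x))"
    by (auto simp: fun_eq_iff hp_def hm_def indicator_def split_pm zero_ennreal.rep_eq)
  define F where "F x = (\<Sum>k<n. Kp P k hp x) * c" for x
  define G where "G x = (\<Sum>k<n. Kp P k hm x) * c" for x
  have Fm[measurable]: "F \<in> borel_measurable M" unfolding F_def by measurable
  have Gm[measurable]: "G \<in> borel_measurable M" unfolding G_def by measurable
  have c0: "c \<noteq> 0" "c \<noteq> top" using n by (auto simp: c_def)
  have Kh1: "Kp P k hm x \<le> 1" if "x \<in> space M" for k x by (rule Kp_le1[OF hm1 that])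
  have Kht: "Kp P k hm x \<noteq> top" if "x \<in> space M" for k x using Kh1[OF that, of k] by (auto simp: top_unique)
  have Sm: "Smean P n (\<lambda>x. enn2ereal (hp x) - enn2ereal (hm x)) x = enn2ereal (F x) - enn2ereal (G x)"
    if x: "x \<in> space M" for x
  proof -
    have "Smean P n (\<lambda>x. enn2ereal (hp x) - enn2ereal (hm x)) x
       = (\<Sum>k<n. enn2ereal (Kp P k hp x) - enn2ereal (Kp P k hm x)) / ereal (real n)"
      unfolding Smean_def using LINK[OF hpm hmm hm1 x] by simp
    also have "\<dots> = (enn2ereal (\<Sum>k<n. Kp P k hp x) - enn2ereal (\<Sum>k<n. Kp P k hm x)) / ereal (real n)"
      by (subst sumdiff) (use Kht[OF x] in auto)
    also have "\<dots> = enn2ereal (F x) - enn2ereal (G x)"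
      unfolding F_def G_def c_def by (rule divdiff) (use n Kht[OF x] in auto)
    finally show ?thesis .
  qed
  have Gb: "G x \<le> ennreal (real n)" if x: "x \<in> space M" for x
  proof -
    have "G x \<le> (\<Sum>k<n. Kp P k hm x) * 1"
      unfolding G_def c_def using n by (intro mult_left_mono) (auto simp: ennreal_le_1)
    also have "\<dots> \<le> (\<Sum>k<n. (1::ennreal))" unfolding mult_1_right by (rule sum_mono) (rule Kh1[OF x])
    finally show ?thesis by (simp add: ennreal_of_nat_eq_real_of_nat)
  qed
  have intF: "(\<integral>\<^sup>+ x. F x \<partial>m) = (\<Sum>k<n. a k) * c"
  proof -
    have "(\<integral>\<^sup>+ x. F x \<partial>m) = (\<integral>\<^sup>+ x. (\<Sum>k<n. Kp P k hp x) \<partial>m) * c"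
      unfolding F_def by (rule nn_integral_multc) (rule meas_m, measurable)
    also have "(\<integral>\<^sup>+ x. (\<Sum>k<n. Kp P k hp x) \<partial>m) = (\<Sum>k<n. \<integral>\<^sup>+ x. Kp P k hp x \<partial>m)"
      by (rule nn_integral_sum) (rule meas_m, measurable)
    also have "\<dots> = (\<Sum>k<n. a k)" unfolding a_def by (simp add: int_mk)
    finally show ?thesis .
  qed
  have intG: "(\<integral>\<^sup>+ x. G x \<partial>m) = (\<Sum>k<n. b k) * c"
  proof -
    have "(\<integral>\<^sup>+ x. G x \<partial>m) = (\<integral>\<^sup>+ x. (\<Sum>k<n. Kp P k hm x) \<partial>m) * c"
      unfolding G_def by (rule nn_integral_multc) (rule meas_m, measurable)
    also have "(\<integral>\<^sup>+ x. (\<Sum>k<n. Kp P k hm x) \<partial>m) = (\<Sum>k<n. \<integral>\<^sup>+ x. Kp P k hm x \<partial>m)"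
      by (rule nn_integral_sum) (rule meas_m, measurable)
    also have "\<dots> = (\<Sum>k<n. b k)" unfolding b_def by (simp add: int_mk)
    finally show ?thesis .
  qed
  have L8: "eint m (Smean P n (\<lambda>x. indicator C x * (ereal (\<gamma> x) - 1)))
      = enn2ereal ((\<Sum>k<n. a k) * c) - enn2ereal ((\<Sum>k<n. b k) * c)"
  proof -
    have "eint m (Smean P n (\<lambda>x. indicator C x * (ereal (\<gamma> x) - 1)))
       = eint m (\<lambda>x. enn2ereal (F x) - enn2ereal (G x))"
      unfolding h_eq by (rule eint_cong) (simp add: Sm space_m)
    also have "\<dots> = enn2ereal (\<integral>\<^sup>+ x. F x \<partial>m) - enn2ereal (\<integral>\<^sup>+ x. G x \<partial>m)"
      by (rule LIN[OF fin meas_m[OF Fm] meas_m[OF Gm], where B="real n"]) (simp add: Gb space_m)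
    finally show ?thesis by (simp add: intF intG)
  qed
  have Tt: "T k \<noteq> top" for k using Tl[of k] by (auto simp: top_unique)
  have bt: "b k \<noteq> top" for k using bl[of k] by (auto simp: top_unique)
  have at: "\<alpha> k \<noteq> top" for k using al[of k] by (auto simp: top_unique)
  obtain tt where tt: "(\<Sum>k<n. T k) = ennreal tt" "0 \<le> tt"
    using Tt by (cases "(\<Sum>k<n. T k)") auto
  obtain bb where bb: "(\<Sum>k<n. b k) = ennreal bb" "0 \<le> bb"
    using bt by (cases "(\<Sum>k<n. b k)") auto
  obtain sa where sa: "(\<Sum>k<n. \<alpha> k) = ennreal sa" "0 \<le> sa"
    using at by (cases "(\<Sum>k<n. \<alpha> k)") auto
  have sal: "sa \<le> real n * e"
  proof -
    have "ennreal sa \<le> (\<Sum>k<n. ennreal e)" unfolding sa(1)[symmetric] by (rule sum_mono) (rule al)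
    also have "\<dots> = ennreal (real n * e)" using e0 by (simp add: ennreal_of_nat_eq_real_of_nat ennreal_mult)
    finally show ?thesis using e0 by (simp add: ennreal_le_iff)
  qed
  have cn: "c = ennreal (1 / real n)" by (simp add: c_def)
  have bbc: "enn2ereal (ennreal bb * c) = ereal (bb / real n)"
    unfolding cn using bb(2) n by (simp add: ennreal_mult[symmetric] del: ennreal_mult)
  have sb2: "enn2ereal ((\<Sum>k<n. a k) * c) - ereal (bb / real n) \<le> ereal s"
    using sb L8 bb(1) bbc by simp
  have atop: "(\<Sum>k<n. a k) \<noteq> top"
  proof
    assume "(\<Sum>k<n. a k) = top"
    then have "(\<Sum>k<n. a k) * c = top" using c0 by (simp add: ennreal_mult_eq_top_iff)
    then show False using sb2 by simp
  qed
  obtain aa where aa: "(\<Sum>k<n. a k) = ennreal aa" "0 \<le> aa"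
    using atop by (cases "(\<Sum>k<n. a k)") auto
  have aac: "enn2ereal (ennreal aa * c) = ereal (aa / real n)"
    unfolding cn using aa(2) n by (simp add: ennreal_mult[symmetric] del: ennreal_mult)
  have r1: "aa / real n - bb / real n \<le> s"
    using sb2 aa(1) aac by simp
  have r2: "2 * tt + bb \<le> sa + real n * ((ph + 1) * e) + aa"
  proof -
    have "2 * ennreal tt + ennreal bb \<le> ennreal (sa + real n * ((ph + 1) * e) + aa)"
      using L7 tt bb sa aa ph0 e0
      by (simp add: ennreal_plus[symmetric] ennreal_mult[symmetric] ennreal_of_nat_eq_real_of_nat del: ennreal_plus ennreal_mult)
    moreover have "2 * ennreal tt + ennreal bb = ennreal (2 * tt + bb)"
      using tt bb by (simp add: ennreal_plus ennreal_mult)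
    moreover have "0 \<le> sa + real n * ((ph + 1) * e) + aa" using ph0 e0 sa aa by simp
    ultimately show ?thesis using ennreal_le_iff by metis
  qed
  have r3: "tt / real n \<le> e/2 * ph + e + s/2"
  proof -
    have nn: "0 < real n" using n by simp
    have "aa - bb \<le> s * real n" using r1 nn by (simp add: field_simps)
    then have "2 * tt \<le> real n * (e * ph + 2 * e + s)" using r2 sal by (simp add: algebra_simps)
    then show ?thesis using nn by (simp add: field_simps)
  qed
  have "eint NN (Smean P n (indicator A)) = enn2ereal (ennreal tt * c)"
    using L1[OF A n] tt unfolding T_def c_def by simp
  also have "\<dots> = ereal (tt / real n)"
    unfolding cn using tt(2) n by (simp add: ennreal_mult[symmetric] del: ennreal_mult)
  finally show ?thesis using r3 by simp
qed

end

theorem theorem3p9: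
  fixes M :: "'a measure" and P :: "'a \<Rightarrow> 'a measure" and m :: "'a measure"
    and C :: "'a set" and \<phi> :: "('a \<Rightarrow> real) \<Rightarrow> real" and \<gamma> :: "'a \<Rightarrow> real"
    and n0 :: nat
  assumes markov: "P \<in> M \<rightarrow>\<^sub>M prob_algebra M"
    and C: "C \<in> sets M"
    and phi_nonneg: "\<forall>f\<in>B1plus M. 0 \<le> \<phi> f"
    and gamma_meas: "\<gamma> \<in> borel_measurable M"
    and gamma_nonneg: "\<forall>x\<in>space M. 0 \<le> \<gamma> x"
    and i: "\<forall>x\<in>C. \<forall>f\<in>B1plus M. kop P (\<lambda>y. ereal (f y)) x \<le> ereal (\<phi> f + \<gamma> x)"
    and m: "finite_measure m" "sets m = sets M"
    and ii1: "\<forall>\<epsilon>>0. \<exists>\<eta>>0. \<forall>A\<in>sets M. measure (mR M P m) A < \<eta> \<longrightarrow>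
                 \<phi> (\<lambda>x. real_of_ereal (Rop P (indicator A) x)) < \<epsilon>"
    and n0: "0 < n0"
    and ii2: "(SUP n\<in>{n0..}. eint m (Smean P n (\<lambda>x. indicator C x * (ereal (\<gamma> x) - 1)))) < 0"
  shows "mean_almost_invariant M P (mR M P m)"
proof -
  interpret kern M P by unfold_locales (rule markov)
  interpret fm: finite_measure m by (rule m(1))
  define h where "h = (\<lambda>x. indicator C x * (ereal (\<gamma> x) - 1) :: ereal)"
  define S where "S = (SUP n\<in>{n0..}. eint m (Smean P n h))"
  have S0: "S < 0" using ii2 unfolding S_def h_def .
  have mEt: "emeasure m (space m) \<noteq> top" by simp
  obtain e where e: "emeasure m (space m) = ennreal e" "0 \<le> e"
    using mEt by (cases "emeasure m (space m)") auto
  have epos: "0 < e"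
  proof (rule ccontr)
    assume "\<not> 0 < e"
    then have mE0: "emeasure m (space m) = 0" using e by simp
    have z: "(\<integral>\<^sup>+ x. f x \<partial>m) = 0" for f :: "'a \<Rightarrow> ennreal"
    proof -
      have "(\<integral>\<^sup>+ x. f x \<partial>m) \<le> (\<integral>\<^sup>+ x. top \<partial>m)" by (rule nn_integral_mono) simp
      also have "\<dots> = 0" using mE0 by simp
      finally show ?thesis by simp
    qed
    have "eint m F = 0" for F by (simp add: eint_def z zero_ennreal.rep_eq)
    then have "S = 0" unfolding S_def by simp
    then show False using S0 by simp
  qed
  have neM: "space M \<noteq> {}"
  proof
    assume "space M = {}"
    then have "space m = {}" using m(2) sets_eq_imp_space_eq by metis
    then show False using e epos by simp
  qed
  interpret kern2 M P m by unfold_locales (use m(2) neM in auto)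
  obtain s0 where s0: "S < ereal s0" "s0 < 0"
  proof (cases S)
    case (real r)
    then show ?thesis using S0 that[of "r/2"] by simp
  next
    case PInf then show ?thesis using S0 by simp
  next
    case MInf then show ?thesis using that[of "-1"] by simp
  qed
  define s where "s = max s0 (-e)"
  have s_neg: "s < 0" and s_ge: "-e \<le> s" using s0 epos by (auto simp: s_def)
  have sb: "eint m (Smean P n h) \<le> ereal s" if "n0 \<le> n" for n
  proof -
    have "eint m (Smean P n h) \<le> S" unfolding S_def by (rule SUP_upper) (use that in simp)
    also have "\<dots> \<le> ereal s0" using s0 by simp
    also have "\<dots> \<le> ereal s" by (simp add: s_def)
    finally show ?thesis .
  qed
  define \<delta> where "\<delta> = 1 + s / (2 * e)"
  define \<psi> where "\<psi> A = e / 2 * \<phi> (\<lambda>x. real_of_ereal (Rop P (indicator A) x))" for A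
  have eq: "mR M P m = NN" by (rule mR_eq)
  have eNN: "emeasure NN (space M) = ennreal e"
  proof -
    have "emeasure NN (space M) = (\<Sum>j. cw j * ennreal e)"
      by (simp add: emeasure_NN nu_def emeasure_mk_space e)
    also have "\<dots> = ennreal e" by (simp add: cw_sum mult.commute[of _ "ennreal e"])
    finally show ?thesis .
  qed
  have finNN: "finite_measure NN" by (rule finite_measureI) (simp add: space_NN eNN)
  have mNN: "measure NN (space M) = e" using eNN e by (simp add: measure_def)
  have fA: "(\<lambda>x. real_of_ereal (Rop P (indicator A) x)) = (\<lambda>x. enn2real (Rn P A x))" for A
    by (simp add: Rop_enn')
  have B1: "(\<lambda>x. real_of_ereal (Rop P (indicator A) x)) \<in> B1plus M" if A: "A \<in> sets M" for A
  proof -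
    have "(\<lambda>x. enn2real (Rn P A x)) \<in> borel_measurable M" using A by measurable
    moreover have "enn2real (Rn P A x) \<le> 1" if "x \<in> space M" for x
      using enn2real_mono[OF Rn_le1[OF that, of A]] by simp
    ultimately show ?thesis unfolding fA B1plus_def by auto
  qed
  have psi0: "0 \<le> \<psi> A" if "A \<in> sets M" for A
    unfolding \<psi>_def using phi_nonneg B1[OF that] epos by simp
  have iA: "\<forall>x\<in>C. K P (Rn P A) x \<le> ennreal (\<phi> (\<lambda>x. real_of_ereal (Rop P (indicator A) x)) + \<gamma> x)"
    if A: "A \<in> sets M" for A
  proof
    fix x assume xC: "x \<in> C"
    have x: "x \<in> space M" using xC C sets.sets_into_space by blast
    let ?f = "\<lambda>x. real_of_ereal (Rop P (indicator A) x)"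
    have "kop P (\<lambda>y. ereal (?f y)) x = eint (P x) (\<lambda>y. enn2ereal (Rn P A y))"
      unfolding kop_def
    proof (rule eint_cong)
      fix y assume "y \<in> space (P x)"
      then have y: "y \<in> space M" using space_Px[OF x] by simp
      have "Rn P A y \<noteq> top" using Rn_le1[OF y, of A] by (auto simp: top_unique)
      then show "ereal (?f y) = enn2ereal (Rn P A y)"
        by (cases "Rn P A y") (auto simp: Rop_enn)
    qed
    also have "\<dots> = enn2ereal (K P (Rn P A) x)" by (simp add: eint_enn K_def)
    finally have "enn2ereal (K P (Rn P A) x) \<le> ereal (\<phi> ?f + \<gamma> x)"
      using i xC B1[OF A] by metis
    moreover have "0 \<le> \<phi> ?f + \<gamma> x" using phi_nonneg B1[OF A] gamma_nonneg x by fastforce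
    ultimately show "K P (Rn P A) x \<le> ennreal (\<phi> ?f + \<gamma> x)"
      by (metis e2ennreal_enn2ereal e2ennreal_ereal e2ennreal_mono)
  qed
  have main: "eint NN (Smean P n (indicator A)) \<le> ereal (\<psi> A + \<delta> * measure NN (space M))"
    if A: "A \<in> sets M" and n: "n0 \<le> n" for A n
  proof -
    have "eint NN (Smean P n (indicator A))
        \<le> ereal (e/2 * \<phi> (\<lambda>x. real_of_ereal (Rop P (indicator A) x)) + e + s/2)"
      by (rule core[OF A _ C gamma_meas gamma_nonneg _ iA[OF A] m(1) sb[OF n, unfolded h_def] e])
         (use n n0 phi_nonneg B1[OF A] in auto)
    also have "e/2 * \<phi> (\<lambda>x. real_of_ereal (Rop P (indicator A) x)) + e + s/2 = \<psi> A + \<delta> * measure NN (space M)"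
      unfolding \<psi>_def \<delta>_def mNN using epos by (simp add: field_simps)
    finally show ?thesis .
  qed
  show ?thesis
    unfolding mean_almost_invariant_def eq
  proof (intro conjI exI[of _ \<delta>] exI[of _ \<psi>] exI[of _ n0])
    show "finite_measure NN" by (rule finNN)
    show "sets NN = sets M" by (rule sets_NN)
    show "0 \<le> \<delta>" unfolding \<delta>_def using s_ge epos by (simp add: field_simps)
    show "\<delta> < 1" unfolding \<delta>_def using s_neg epos by (simp add: field_simps)
    show "0 < n0" by (rule n0)
    show "\<forall>A\<in>sets M. 0 \<le> \<psi> A" using psi0 by blast
    show "\<forall>\<epsilon>>0. \<exists>\<eta>>0. \<forall>A\<in>sets M. measure NN A < \<eta> \<longrightarrow> \<psi> A < \<epsilon>"
    proof (intro allI impI)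
      fix \<epsilon> :: real assume "0 < \<epsilon>"
      then have "0 < 2 * \<epsilon> / e" using epos by simp
      then obtain \<eta> where \<eta>: "0 < \<eta>" "\<forall>A\<in>sets M. measure NN A < \<eta> \<longrightarrow>
                 \<phi> (\<lambda>x. real_of_ereal (Rop P (indicator A) x)) < 2 * \<epsilon> / e"
        using ii1 unfolding eq by blast
      show "\<exists>\<eta>>0. \<forall>A\<in>sets M. measure NN A < \<eta> \<longrightarrow> \<psi> A < \<epsilon>"
      proof (intro exI[of _ \<eta>] conjI ballI impI)
        show "0 < \<eta>" by (rule \<eta>(1))
        fix A assume "A \<in> sets M" "measure NN A < \<eta>"
        then have "\<phi> (\<lambda>x. real_of_ereal (Rop P (indicator A) x)) < 2 * \<epsilon> / e" using \<eta>(2) by blast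
        then show "\<psi> A < \<epsilon>" unfolding \<psi>_def using epos by (simp add: field_simps)
      qed
    qed
    show "\<forall>A\<in>sets M. \<forall>n\<ge>n0. eint NN (Smean P n (indicator A)) \<le> ereal (\<psi> A + \<delta> * measure NN (space M))"
      using main by blast
  qed
qed

end
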